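(* Suppose $\mathcal{F}=\{X;f_\lambda\mid\lambda\in\Lambda\}$ is a minimal IFS on an infinite compact metric space $X$ and $\mathcal{F}$ has some non-periodic regularly recurrent point. If $l,n\in NM(\mathcal{F})$ and $l$ is a multiple of $n$, then $C_l$ refines $C_n$ (every element of $C_l$ is contained in some element of $C_n$).
   Context: $\Lambda$ is a finite nonempty set, $f_\lambda:X\to X$ continuous. $\Lambda^{\mathbb{Z}_+}$ is the set of sequences $\sigma=(\lambda_1,\lambda_2,\dots)$ in $\Lambda$, $\mathcal{F}_{\sigma_n}=f_{\lambda_n}\circ\cdots\circ f_{\lambda_1}$, $\mathcal{F}_{\sigma_0}=\mathrm{id}$. A nonempty closed $M\subseteq X$ is $\mathcal{F}^n$-minimal if $\mathcal{F}_{\sigma_n}(M)=M$ for all $\sigma$ and $\mathcal{F}_{\sigma_n}(A)\ne A$ for every nonempty proper $A\subsetneq M$ and every $\sigma$. $\mathcal{F}$ is minimal if the only $\mathcal{F}^1$-minimal set is $X$. $NM(\mathcal{F})$ is the set of positive integers $i$ such that some subset $M\subseteq X$ is $\mathcal{F}^i$-minimal but not $\mathcal{F}^j$-minimal for $j=1,\dots,i-1$. For $n\in NM(\mathcal{F})$, $C_n$ denotes the (unique) cover of $X$ consisting of $n$ pairwise disjoint $\mathcal{F}^n$-minimal sets. A point $x$ is regularly recurrent if for every neighborhood $U$ of $x$ there is $n\ge1$ with $\mathcal{F}_{\sigma_{ni}}(x)\in U$ for all $i\ge0$ and all $\sigma$. A point is periodic if some finite composition $f_{\lambda_n}\circ\cdots\circ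 f_{\lambda_1}$ fixes it. *)

theory Defs
  imports "HOL-Analysis.Analysis"
begin

text \<open>Iterated composition along a sequence: sigma 0 plays the role of lambda_1.
  Fcomp f sigma n = f (sigma (n-1)) o ... o f (sigma 0), Fcomp f sigma 0 = id.\<close>
fun Fcomp :: "('l \<Rightarrow> 'a \<Rightarrow> 'a) \<Rightarrow> (nat \<Rightarrow> 'l) \<Rightarrow> nat \<Rightarrow> 'a \<Rightarrow> 'a" where
  "Fcomp f \<sigma> 0 = id"
| "Fcomp f \<sigma> (Suc n) = f (\<sigma> n) \<circ> Fcomp f \<sigma> n"

definition seqs :: "'l set \<Rightarrow> (nat \<Rightarrow> 'l) set" where
  "seqs \<Lambda> = {\<sigma>. \<forall>i. \<sigma> i \<in> \<Lambda>}"

definition Fn_minimal ::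
  "'a::topological_space set \<Rightarrow> 'l set \<Rightarrow> ('l \<Rightarrow> 'a \<Rightarrow> 'a) \<Rightarrow> nat \<Rightarrow> 'a set \<Rightarrow> bool" where
  "Fn_minimal X \<Lambda> f n M \<longleftrightarrow>
     M \<subseteq> X \<and> M \<noteq> {} \<and> closed M \<and>
     (\<forall>\<sigma>\<in>seqs \<Lambda>. Fcomp f \<sigma> n ` M = M) \<and>
     (\<forall>A. closed A \<and> A \<noteq> {} \<and> A \<subset> M \<longrightarrow> (\<forall>\<sigma>\<in>seqs \<Lambda>. Fcomp f \<sigma> n ` A \<noteq> A))"

definition IFS_minimal :: "'a::topological_space set \<Rightarrow> 'l set \<Rightarrow> ('l \<Rightarrow> 'a \<Rightarrow> 'a) \<Rightarrow> bool" where
  "IFS_minimal X \<Lambda> f \<longleftrightarrow> (\<forall>M. Fn_minimal X \<Lambda> f 1 M \<longleftrightarrow> M = X)"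

definition NM :: "'a::topological_space set \<Rightarrow> 'l set \<Rightarrow> ('l \<Rightarrow> 'a \<Rightarrow> 'a) \<Rightarrow> nat set" where
  "NM X \<Lambda> f = {i. i \<ge> 1 \<and> (\<exists>M. Fn_minimal X \<Lambda> f i M \<and>
                         (\<forall>j\<in>{1..<i}. \<not> Fn_minimal X \<Lambda> f j M))}"

definition is_Cn ::
  "'a::topological_space set \<Rightarrow> 'l set \<Rightarrow> ('l \<Rightarrow> 'a \<Rightarrow> 'a) \<Rightarrow> nat \<Rightarrow> 'a set set \<Rightarrow> bool" where
  "is_Cn X \<Lambda> f n C \<longleftrightarrow> finite C \<and> card C = n \<and> \<Union>C = X \<and> disjoint C \<and>
     (\<forall>M\<in>C. Fn_minimal X \<Lambda> f n M)"

definition regularly_recurrent ::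
  "'a::topological_space set \<Rightarrow> 'l set \<Rightarrow> ('l \<Rightarrow> 'a \<Rightarrow> 'a) \<Rightarrow> 'a \<Rightarrow> bool" where
  "regularly_recurrent X \<Lambda> f x \<longleftrightarrow>
     (\<forall>U. open U \<and> x \<in> U \<longrightarrow>
        (\<exists>n\<ge>1. \<forall>i. \<forall>\<sigma>\<in>seqs \<Lambda>. Fcomp f \<sigma> (n * i) x \<in> U))"

definition periodic_pt :: "'l set \<Rightarrow> ('l \<Rightarrow> 'a \<Rightarrow> 'a) \<Rightarrow> 'a \<Rightarrow> bool" where
  "periodic_pt \<Lambda> f x \<longleftrightarrow> (\<exists>n\<ge>1. \<exists>\<sigma>\<in>seqs \<Lambda>. Fcomp f \<sigma> n x = x)"

end

theory Submission
  imports Defs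
begin

lemma Fcomp_const_add: "Fcomp f (\<lambda>_. c) (a + b) = Fcomp f (\<lambda>_. c) a \<circ> Fcomp f (\<lambda>_. c) b"
  by (induction a) auto

lemma Fcomp_const_mult:
  assumes "Fcomp f (\<lambda>_. c) n ` B = B"
  shows "Fcomp f (\<lambda>_. c) (n * k) ` B = B"
proof (induction k)
  case 0 then show ?case by simp
next
  case (Suc k)
  have "Fcomp f (\<lambda>_. c) (n * Suc k) = Fcomp f (\<lambda>_. c) n \<circ> Fcomp f (\<lambda>_. c) (n * k)"
    by (simp add: Fcomp_const_add[symmetric])
  then show ?case using Suc assms by (simp only: image_comp[symmetric])
qed

theorem lemma4p3:
  fixes X :: "'a::metric_space set" and \<Lambda> :: "'l set" and f :: "'l \<Rightarrow> 'a \<Rightarrow> 'a"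
    and l n :: nat and C D :: "'a set set"
  assumes "finite \<Lambda>" and "\<Lambda> \<noteq> {}"
    and "compact X" and "infinite X"
    and "\<And>lam. lam \<in> \<Lambda> \<Longrightarrow> continuous_on X (f lam) \<and> f lam ` X \<subseteq> X"
    and "IFS_minimal X \<Lambda> f"
    and "\<exists>x\<in>X. regularly_recurrent X \<Lambda> f x \<and> \<not> periodic_pt \<Lambda> f x"
    and "l \<in> NM X \<Lambda> f" and "n \<in> NM X \<Lambda> f" and "n dvd l"
    and "is_Cn X \<Lambda> f l C" and "is_Cn X \<Lambda> f n D"
  shows "\<forall>A\<in>C. \<exists>B\<in>D. A \<subseteq> B"
proof
  fix A assume AC: "A \<in> C"
  obtain c where c: "c \<in> \<Lambda>" using assms(2) by blast
  define \<sigma> where "\<sigma> = (\<lambda>_::nat. c)"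
  have \<sigma>: "\<sigma> \<in> seqs \<Lambda>" using c by (simp add: seqs_def \<sigma>_def)
  obtain k where lk: "l = n * k" using assms(10) by blast
  define F where "F = Fcomp f \<sigma> l"
  have Amin: "Fn_minimal X \<Lambda> f l A" using assms(11) AC by (simp add: is_Cn_def)
  have AX: "A \<subseteq> X" and Ane: "A \<noteq> {}" and FA: "F ` A = A"
    using Amin \<sigma> by (auto simp: Fn_minimal_def F_def)
  have Dcov: "\<Union>D = X" and Ddisj: "disjoint D" using assms(12) by (auto simp: is_Cn_def)
  have Dinv: "F ` B = B" if "B \<in> D" for B
  proof -
    have "Fn_minimal X \<Lambda> f n B" using assms(12) that by (simp add: is_Cn_def)
    then have "Fcomp f \<sigma> n ` B = B" using \<sigma> by (simp add: Fn_minimal_def)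
    then show ?thesis unfolding F_def lk \<sigma>_def by (rule Fcomp_const_mult)
  qed
  have Dclosed: "closed B" if "B \<in> D" for B
    using assms(12) that by (simp add: is_Cn_def Fn_minimal_def)
  obtain a where a: "a \<in> A" using Ane by blast
  then obtain B where BD: "B \<in> D" and aB: "a \<in> B" using AX Dcov by blast
  have eq: "F ` (A \<inter> B) = A \<inter> B"
  proof
    show "F ` (A \<inter> B) \<subseteq> A \<inter> B" using FA Dinv[OF BD] by blast
  next
    show "A \<inter> B \<subseteq> F ` (A \<inter> B)"
    proof
      fix y assume y: "y \<in> A \<inter> B"
      then obtain x where x: "x \<in> A" "y = F x" using FA by (metis IntD1 imageE)
      then obtain B' where B': "B' \<in> D" "x \<in> B'" using AX Dcov by blast
      then have "y \<in> B'" using Dinv[OF B'(1)] x by blast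
      then have "B' = B" using y Ddisj B' BD by (meson IntD2 disjointD disjoint_iff)
      then show "y \<in> F ` (A \<inter> B)" using x B' by blast
    qed
  qed
  have "A \<subseteq> B"
  proof (rule ccontr)
    assume "\<not> A \<subseteq> B"
    then have "A \<inter> B \<subset> A" by blast
    moreover have "closed (A \<inter> B)" using Amin Dclosed[OF BD] by (auto simp: Fn_minimal_def)
    moreover have "A \<inter> B \<noteq> {}" using a aB by blast
    ultimately have "F ` (A \<inter> B) \<noteq> A \<inter> B" using Amin \<sigma> unfolding Fn_minimal_def F_def by blast
    then show False using eq by simp
  qed
  then show "\<exists>B\<in>D. A \<subseteq> B" using BD by blast
qed

end
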